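(* Let $\mathcal{Y}=\{1,\dots,m\}$ be a finite set of classes and $\Delta(\mathcal{Y})$ the set of probability vectors on $\mathcal{Y}$. Let $u:\mathcal{Y}\times\mathcal{Y}\to\mathbb{R}_+$ be nonnegative and nondegenerate (for every $y$ there is $a$ with $u(a,y)>0$), and suppose the $m\times m$ matrix $U$ with entries $U_{y',y}=u(y',y)$ is invertible, with inverse $U^{-1}$. Let $\ell$ be a strictly proper loss function. Let $p^u:\Delta(\mathcal{Y})\to\Delta(\mathcal{Y})$ be the optimal utility-weighted prediction function, $p^u_y(q)=\bar u(y,q)/\sum_{y'}\bar u(y',q)$ where $\bar u(y,q)=\sum_{y'}u(y,y')q_{y'}$. Then $p^u$ is invertible, with closed-form inverse (on its image) $$[p^u_y]^{-1}(p)=\frac{\bar u^{-1}(y,p)}{\sum_{y'\in\mathcal{Y}}\bar u^{-1}(y',p)},$$ where $\bar u^{-1}(y,p)\equiv\sum_{y'\in\mathcal{Y}}(U^{-1})_{y,y'}\,p_{y'}$ is the expected utility of $y$ given $p$ under the (inverse) utility function defined by the matrix $U^{-1}$.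
   Context: A loss $\ell:\Delta(\mathcal{Y})\times\mathcal{Y}\to\mathbb{R}$ is strictly proper if for every $q\in\Delta(\mathcal{Y})$, $q$ is the unique minimizer over $p\in\Delta(\mathcal{Y})$ of $\sum_y q_y\ell(p,y)$; under this assumption $p^u(q)$ is the unique minimizer of $p\mapsto\sum_y q_y\sum_{y'}\ell(p,y')u(y',y)$. *)

theory Defs
  imports "HOL-Analysis.Analysis"
begin

definition prob_simplex :: "(real^'y::finite) set" where
  "prob_simplex = {q. (\<forall>y. 0 \<le> q $ y) \<and> (\<Sum>y\<in>UNIV. q $ y) = 1}"

definition strictly_proper :: "(real^'y::finite \<Rightarrow> 'y \<Rightarrow> real) \<Rightarrow> bool" where
  "strictly_proper l \<longleftrightarrow>
     (\<forall>q\<in>prob_simplex. \<forall>p\<in>prob_simplex. p \<noteq> q \<longrightarrow>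
        (\<Sum>y\<in>UNIV. q $ y * l q y) < (\<Sum>y\<in>UNIV. q $ y * l p y))"

definition ubar :: "('y::finite \<Rightarrow> 'y \<Rightarrow> real) \<Rightarrow> 'y \<Rightarrow> real^'y \<Rightarrow> real" where
  "ubar u y q = (\<Sum>y'\<in>UNIV. u y y' * q $ y')"

definition pu :: "('y::finite \<Rightarrow> 'y \<Rightarrow> real) \<Rightarrow> real^'y \<Rightarrow> real^'y" where
  "pu u q = (\<chi> y. ubar u y q / (\<Sum>y'\<in>UNIV. ubar u y' q))"

definition util_matrix :: "('y::finite \<Rightarrow> 'y \<Rightarrow> real) \<Rightarrow> real^'y^'y" where
  "util_matrix u = (\<chi> y' y. u y' y)"

definition ubar_inv :: "('y::finite \<Rightarrow> 'y \<Rightarrow> real) \<Rightarrow> 'y \<Rightarrow> real^'y \<Rightarrow> real" where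
  "ubar_inv u y p = (\<Sum>y'\<in>UNIV. matrix_inv (util_matrix u) $ y $ y' * p $ y')"

definition pu_inv :: "('y::finite \<Rightarrow> 'y \<Rightarrow> real) \<Rightarrow> real^'y \<Rightarrow> real^'y" where
  "pu_inv u p = (\<chi> y. ubar_inv u y p / (\<Sum>y'\<in>UNIV. ubar_inv u y' p))"

end

theory Submission
  imports Defs
begin

lemma minv_left:
  fixes A :: "real^'n^'n"
  assumes "invertible A"
  shows "matrix_inv A ** A = mat 1"
proof -
  have "\<exists>A'. A ** A' = mat 1 \<and> A' ** A = mat 1" using assms by (simp add: invertible_def)
  hence "A ** matrix_inv A = mat 1 \<and> matrix_inv A ** A = mat 1"
    unfolding matrix_inv_def by (rule someI_ex)
  thus ?thesis by simp
qed

lemma ubar_mv: "ubar u y q = (util_matrix u *v q) $ y"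
  by (simp add: ubar_def util_matrix_def matrix_vector_mult_def)

lemma ubar_inv_mv: "ubar_inv u y p = (matrix_inv (util_matrix u) *v p) $ y"
  by (simp add: ubar_inv_def matrix_vector_mult_def)

lemma S_pos:
  fixes u :: "'y::finite \<Rightarrow> 'y \<Rightarrow> real"
  assumes nonneg: "\<forall>a y. 0 \<le> u a y"
    and nondeg: "\<forall>y. \<exists>a. 0 < u a y"
    and q: "q \<in> prob_simplex"
  shows "0 < (\<Sum>y\<in>UNIV. ubar u y q)"
proof -
  have q0: "\<forall>y. 0 \<le> q $ y" and q1: "(\<Sum>y\<in>UNIV. q $ y) = 1"
    using q by (auto simp: prob_simplex_def)
  have eq: "(\<Sum>y\<in>UNIV. ubar u y q) = (\<Sum>y'\<in>UNIV. (\<Sum>y\<in>UNIV. u y y') * q $ y')"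
    unfolding ubar_def sum_distrib_right by (rule sum.swap)
  have "\<exists>y0. q $ y0 \<noteq> 0"
  proof (rule ccontr)
    assume "\<not> (\<exists>y0. q $ y0 \<noteq> 0)"
    hence "(\<Sum>y\<in>UNIV. q $ y) = 0" by simp
    with q1 show False by simp
  qed
  then obtain y0 where y0: "q $ y0 \<noteq> 0" by blast
  hence y0p: "0 < q $ y0" using q0 by (simp add: order_le_neq_trans)
  obtain a where a: "0 < u a y0" using nondeg by blast
  have cpos: "\<And>y'. 0 < (\<Sum>y\<in>UNIV. u y y')"
  proof -
    fix y'
    obtain b where b: "0 < u b y'" using nondeg by blast
    have "u b y' \<le> (\<Sum>y\<in>UNIV. u y y')"
      by (rule member_le_sum) (use nonneg in auto)
    thus "0 < (\<Sum>y\<in>UNIV. u y y')" using b by linarith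
  qed
  have "0 < (\<Sum>y\<in>UNIV. u y y0) * q $ y0" using cpos y0p by simp
  also have "\<dots> \<le> (\<Sum>y'\<in>UNIV. (\<Sum>y\<in>UNIV. u y y') * q $ y')"
    by (rule member_le_sum) (use cpos q0 in \<open>auto intro: mult_nonneg_nonneg less_imp_le\<close>)
  finally show ?thesis using eq by simp
qed

lemma left_inv:
  fixes u :: "'y::finite \<Rightarrow> 'y \<Rightarrow> real"
  assumes nonneg: "\<forall>a y. 0 \<le> u a y"
    and nondeg: "\<forall>y. \<exists>a. 0 < u a y"
    and inv: "invertible (util_matrix u)"
    and q: "q \<in> prob_simplex"
  shows "pu_inv u (pu u q) = q"
proof -
  define S where "S = (\<Sum>y\<in>UNIV. ubar u y q)"
  have Sp: "0 < S" using S_pos[OF nonneg nondeg q] by (simp add: S_def)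
  have q1: "(\<Sum>y\<in>UNIV. q $ y) = 1" using q by (simp add: prob_simplex_def)
  have pq: "pu u q = (1/S) *\<^sub>R (util_matrix u *v q)"
    by (simp add: pu_def vec_eq_iff ubar_mv S_def divide_inverse mult.commute)
  have "matrix_inv (util_matrix u) *v pu u q = (1/S) *\<^sub>R q"
    unfolding pq matrix_vector_mult_scaleR matrix_vector_mul_assoc minv_left[OF inv] by simp
  hence ui: "\<And>y. ubar_inv u y (pu u q) = q $ y / S"
    by (simp add: ubar_inv_mv)
  have "(\<Sum>y\<in>UNIV. ubar_inv u y (pu u q)) = 1 / S"
    by (simp add: ui sum_divide_distrib[symmetric] q1)
  thus ?thesis using Sp by (simp add: pu_inv_def vec_eq_iff ui)
qed

theorem theorem2:
  fixes u :: "'y::finite \<Rightarrow> 'y \<Rightarrow> real"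
    and l :: "real^'y \<Rightarrow> 'y \<Rightarrow> real"
  assumes nonneg: "\<forall>a y. 0 \<le> u a y"
    and nondeg: "\<forall>y. \<exists>a. 0 < u a y"
    and inv: "invertible (util_matrix u)"
    and proper: "strictly_proper l"
  shows "inj_on (pu u) prob_simplex \<and> (\<forall>q\<in>prob_simplex. pu_inv u (pu u q) = q)"
proof -
  have li: "\<forall>q\<in>prob_simplex. pu_inv u (pu u q) = q"
    using left_inv[OF nonneg nondeg inv] by blast
  hence "inj_on (pu u) prob_simplex" by (metis inj_onI)
  with li show ?thesis by blast
qed

end
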